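(* Let $S$ be a semigroup generated by a finite set $A$. Then $S$ is right simple if and only if the semimetric space $(S,d_A)$ is quasi-metric.
   Context: $d_A(x,y)=\inf\{|w|:w\in A^*,\ xw=y\}$, where $A^*$ is the free monoid on $A$ (empty word allowed) and $\inf\emptyset=\infty$. A semigroup is right simple if it has a single $\mathcal{R}$-class, i.e. $xS^1=yS^1$ for all $x,y\in S$ ($S^1$ being $S$ with an identity adjoined). A semimetric space $(X,d)$ (distance values in $\mathbb{R}^{\ge0}\cup\{\infty\}$, zero exactly on the diagonal, triangle inequality, not necessarily symmetric) is quasi-metric if it is strongly connected (no two points at distance $\infty$) and there exist $1\le\lambda<\infty$, $0\le\epsilon<\infty$ with $d(y,x)\le\lambda d(x,y)+\epsilon$ for all $x,y\in X$. *)

theory Defs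
  imports "HOL-Library.Extended_Nonnegative_Real"
begin

inductive_set sgen :: "'a::semigroup_mult set \<Rightarrow> 'a set" for A where
  base: "a \<in> A \<Longrightarrow> a \<in> sgen A"
| step: "x \<in> sgen A \<Longrightarrow> a \<in> A \<Longrightarrow> x * a \<in> sgen A"

definition act :: "'a::semigroup_mult \<Rightarrow> 'a list \<Rightarrow> 'a" where
  "act x w = foldl (*) x w"

text \<open>d_A(x,y) = inf{|w| : w in A*, xw = y}, inf of empty set = infinity.\<close>
definition dA :: "'a::semigroup_mult set \<Rightarrow> 'a \<Rightarrow> 'a \<Rightarrow> ennreal" where
  "dA A x y = (INF w \<in> {w. set w \<subseteq> A \<and> act x w = y}. of_nat (length w))"

definition right_ideal1 :: "'a::semigroup_mult \<Rightarrow> 'a set" where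
  "right_ideal1 x = insert x (range (\<lambda>s. x * s))"

definition right_simple :: "'a::semigroup_mult itself \<Rightarrow> bool" where
  "right_simple _ = (\<forall>x y :: 'a. right_ideal1 x = right_ideal1 y)"

definition semimetric :: "'b set \<Rightarrow> ('b \<Rightarrow> 'b \<Rightarrow> ennreal) \<Rightarrow> bool" where
  "semimetric X d = ((\<forall>x\<in>X. \<forall>y\<in>X. d x y = 0 \<longleftrightarrow> x = y) \<and>
     (\<forall>x\<in>X. \<forall>y\<in>X. \<forall>z\<in>X. d x z \<le> d x y + d y z))"

definition quasi_metric :: "'b set \<Rightarrow> ('b \<Rightarrow> 'b \<Rightarrow> ennreal) \<Rightarrow> bool" where
  "quasi_metric X d = (semimetric X d \<and> (\<forall>x\<in>X. \<forall>y\<in>X. d x y \<noteq> \<infinity>) \<and>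
     (\<exists>lam eps :: real. 1 \<le> lam \<and> 0 \<le> eps \<and>
        (\<forall>x\<in>X. \<forall>y\<in>X. d y x \<le> ennreal lam * d x y + ennreal eps)))"

end

theory Submission
  imports Defs
begin

lemma act_append: "act x (u @ v) = act (act x u) v"
  by (simp add: act_def)

lemma act_snoc: "act x (u @ [a]) = act x u * a"
  by (simp add: act_def)

lemma act_mult: "act (z * y) w = z * act y w"
  by (induction w arbitrary: y) (simp_all add: act_def mult.assoc)

lemma sgen_word:
  assumes "s \<in> sgen A"
  shows "\<exists>w. set w \<subseteq> A \<and> (\<forall>x. act x w = x * s)"
  using assms
proof (induction rule: sgen.induct)
  case (base a)
  then show ?case by (intro exI[of _ "[a]"]) (simp add: act_def)
next
  case (step x a)
  then obtain w where "set w \<subseteq> A" "\<forall>y. act y w = y * x" by blast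
  then show ?case using step
    by (intro exI[of _ "w @ [a]"]) (simp add: act_snoc mult.assoc)
qed

lemma dA_le: "set w \<subseteq> A \<Longrightarrow> act x w = y \<Longrightarrow> dA A x y \<le> of_nat (length w)"
  unfolding dA_def by (rule INF_lower2[of w]) auto

lemma dA_empty: "\<not> (\<exists>w. set w \<subseteq> A \<and> act x w = y) \<Longrightarrow> dA A x y = \<infinity>"
  unfolding dA_def by simp

lemma dA_attain:
  assumes "\<exists>w. set w \<subseteq> A \<and> act x w = y"
  shows "\<exists>w. set w \<subseteq> A \<and> act x w = y \<and> dA A x y = of_nat (length w)"
proof -
  define P where "P n = (\<exists>w. set w \<subseteq> A \<and> act x w = y \<and> length w = n)" for n
  have "\<exists>n. P n" using assms P_def by blast
  then have "P (LEAST n. P n)" by (rule LeastI_ex)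
  then obtain w where w: "set w \<subseteq> A" "act x w = y" "length w = (LEAST n. P n)"
    unfolding P_def by blast
  have "dA A x y = of_nat (length w)"
  proof (rule antisym)
    show "dA A x y \<le> of_nat (length w)" using w(1,2) by (rule dA_le)
    show "of_nat (length w) \<le> dA A x y"
      unfolding dA_def
    proof (rule INF_greatest)
      fix v assume "v \<in> {w. set w \<subseteq> A \<and> act x w = y}"
      then have "P (length v)" unfolding P_def by blast
      then have "length w \<le> length v" using w(3) Least_le by metis
      then show "(of_nat (length w)::ennreal) \<le> of_nat (length v)" by simp
    qed
  qed
  then show ?thesis using w by blast
qed

lemma semimetric_dA: "semimetric UNIV (dA A)"
  unfolding semimetric_def
proof (intro conjI ballI)
  fix x y
  show "dA A x y = 0 \<longleftrightarrow> x = y"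
  proof
    assume h: "dA A x y = 0"
    then have "\<exists>w. set w \<subseteq> A \<and> act x w = y" using dA_empty by fastforce
    then obtain w where "set w \<subseteq> A" "act x w = y" "dA A x y = of_nat (length w)"
      using dA_attain by blast
    then show "x = y" using h by (simp add: act_def)
  next
    assume "x = y"
    have "dA A x y \<le> of_nat (length ([]::'a list))" by (rule dA_le) (auto simp: act_def \<open>x = y\<close>)
    then show "dA A x y = 0" by simp
  qed
next
  fix x y z
  show "dA A x z \<le> dA A x y + dA A y z"
  proof (cases "(\<exists>w. set w \<subseteq> A \<and> act x w = y) \<and> (\<exists>w. set w \<subseteq> A \<and> act y w = z)")
    case True
    then obtain u v where u: "set u \<subseteq> A" "act x u = y" "dA A x y = of_nat (length u)"
      and v: "set v \<subseteq> A" "act y v = z" "dA A y z = of_nat (length v)"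
      using dA_attain[of A x y] dA_attain[of A y z] by blast
    have "dA A x z \<le> of_nat (length (u @ v))"
      using u v by (intro dA_le) (auto simp: act_append)
    then show ?thesis using u v by simp
  next
    case False
    then show ?thesis using dA_empty by fastforce
  qed
qed

lemma right_simple_reach:
  assumes "right_simple TYPE('a::semigroup_mult)" "sgen A = UNIV"
  shows "\<exists>w. set w \<subseteq> A \<and> act (x::'a) w = y"
proof -
  have "y \<in> right_ideal1 x"
    using assms(1) unfolding right_simple_def by (metis insertI1 right_ideal1_def)
  then have "y = x \<or> (\<exists>s. y = x * s)" unfolding right_ideal1_def by auto
  then show ?thesis
  proof
    assume "y = x" then show ?thesis by (intro exI[of _ "[]"]) (simp add: act_def)
  next
    assume "\<exists>s. y = x * s"
    then obtain s where "y = x * s" by blast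
    moreover obtain w where "set w \<subseteq> A" "\<forall>x. act x w = x * s"
      using sgen_word[of s A] assms(2) by blast
    ultimately show ?thesis by metis
  qed
qed

theorem proposition8p2:
  fixes A :: "'a::semigroup_mult set"
  assumes "finite A" and "sgen A = UNIV"
  shows "right_simple TYPE('a) \<longleftrightarrow> quasi_metric UNIV (dA A)"
proof
  assume rs: "right_simple TYPE('a)"
  define W where "W b a = (SOME w. set w \<subseteq> A \<and> act (b * a) w = b)" for b a
  have W: "set (W b a) \<subseteq> A \<and> act (b * a) (W b a) = b" for b a
  proof -
    have "\<exists>w. set w \<subseteq> A \<and> act (b * a) w = b"
      using right_simple_reach[OF rs assms(2)] by blast
    then show ?thesis unfolding W_def by (rule someI_ex)
  qed
  define C where "C = Max ((\<lambda>(b, a). length (W b a)) ` (A \<times> A))"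
  have Cb: "length (W b a) \<le> C" if "b \<in> A" "a \<in> A" for b a
    unfolding C_def using that assms(1) by (intro Max_ge) auto
  have step: "\<exists>w. set w \<subseteq> A \<and> act (x * a) w = x \<and> length w \<le> C" if "a \<in> A" for x a
  proof -
    have "x \<in> sgen A" using assms(2) by simp
    then show ?thesis
    proof (cases rule: sgen.cases)
      case base
      then show ?thesis using W Cb that by blast
    next
      case (step z b)
      have "act (x * a) (W b a) = x"
        using W[of b a] step by (simp add: mult.assoc act_mult)
      then show ?thesis using W Cb that step by blast
    qed
  qed
  have goback: "\<exists>v. set v \<subseteq> A \<and> act (act x u) v = x \<and> length v \<le> C * length u"
    if "set u \<subseteq> A" for x u
    using that
  proof (induction u rule: rev_induct)
    case Nil
    then show ?case by (intro exI[of _ "[]"]) (simp add: act_def)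
  next
    case (snoc a u)
    then obtain v where v: "set v \<subseteq> A" "act (act x u) v = x" "length v \<le> C * length u"
      by auto
    obtain v1 where v1: "set v1 \<subseteq> A" "act (act x u * a) v1 = act x u" "length v1 \<le> C"
      using step[of a "act x u"] snoc by auto
    show ?case using v v1
      by (intro exI[of _ "v1 @ v"]) (auto simp: act_append act_def)
  qed
  have fin: "\<forall>x\<in>UNIV. \<forall>y\<in>UNIV. dA A x y \<noteq> \<infinity>"
  proof (intro ballI)
    fix x y :: 'a
    obtain w where "set w \<subseteq> A" "act x w = y" using right_simple_reach[OF rs assms(2)] by blast
    then have "dA A x y \<le> of_nat (length w)" by (rule dA_le)
    then show "dA A x y \<noteq> \<infinity>" using le_less_trans[OF _ of_nat_less_top] by fastforce
  qed
  have bd: "\<forall>x\<in>UNIV. \<forall>y\<in>UNIV. dA A y x \<le> ennreal (max 1 (real C)) * dA A x y + ennreal 0"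
  proof (intro ballI)
    fix x y :: 'a
    obtain u where u: "set u \<subseteq> A" "act x u = y" "dA A x y = of_nat (length u)"
      using dA_attain[OF right_simple_reach[OF rs assms(2)], of x y] by blast
    obtain v where v: "set v \<subseteq> A" "act y v = x" "length v \<le> C * length u"
      using goback[OF u(1), of x] u(2) by blast
    have "dA A y x \<le> of_nat (length v)" using v by (intro dA_le)
    also have "\<dots> \<le> of_nat (C * length u)" using v(3) by (rule of_nat_mono)
    also have "\<dots> = ennreal (real C * real (length u))"
      by (metis ennreal_of_nat_eq_real_of_nat of_nat_mult)
    also have "\<dots> \<le> ennreal (max 1 (real C) * real (length u))"
      by (intro ennreal_leI mult_right_mono) auto
    also have "\<dots> = ennreal (max 1 (real C)) * dA A x y"
      using u(3) by (simp add: ennreal_mult ennreal_of_nat_eq_real_of_nat)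
    finally show "dA A y x \<le> ennreal (max 1 (real C)) * dA A x y + ennreal 0" by simp
  qed
  show "quasi_metric UNIV (dA A)"
    unfolding quasi_metric_def
    by (intro conjI semimetric_dA fin exI[of _ "max 1 (real C)"] exI[of _ "0::real"]) (use bd in auto)
next
  assume qm: "quasi_metric UNIV (dA A)"
  have reach: "y \<in> right_ideal1 x" for x y :: 'a
  proof -
    have "dA A x y \<noteq> \<infinity>" using qm unfolding quasi_metric_def by blast
    then obtain w where w: "set w \<subseteq> A" "act x w = y" using dA_empty by blast
    show ?thesis
    proof (cases w)
      case Nil then show ?thesis using w by (simp add: act_def right_ideal1_def)
    next
      case (Cons a w')
      then have "y = x * act a w'" using w(2) act_mult[of x a w'] by (simp add: act_def)
      then show ?thesis by (simp add: right_ideal1_def)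
    qed
  qed
  have sub: "right_ideal1 y \<subseteq> right_ideal1 x" for x y :: 'a
  proof
    fix z assume "z \<in> right_ideal1 y"
    moreover have "y \<in> right_ideal1 x" by (rule reach)
    ultimately show "z \<in> right_ideal1 x"
      unfolding right_ideal1_def by (auto simp: mult.assoc)
  qed
  show "right_simple TYPE('a)"
    unfolding right_simple_def using sub by (blast intro: antisym)
qed

end
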